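(* Let $K\ge1$ and $C\ge1$, and define for $t\in(0,1)$ $$H(t)={\rm th}\Big(\frac{C}{2}\max\{2\,{\rm arth}(t),(2\,{\rm arth}(t))^{1/K}\}\Big).$$ Then $H(t)\le C t^{1/K}$ for all $t\in(0,1)$, and thus $H$ is Hölder continuous with exponent $1/K$.
   Context: ${\rm th}$ and ${\rm arth}$ denote the hyperbolic tangent and its inverse. *)

theory Defs
  imports "HOL-Analysis.Analysis"
begin

definition H_fun :: "real \<Rightarrow> real \<Rightarrow> real \<Rightarrow> real" where
  "H_fun K C t = tanh ((C / 2) * max (2 * artanh t) ((2 * artanh t) powr (1 / K)))"

end

theory Submission
  imports Defs
begin

lemma tanh_artanh: fixes t :: real assumes "\<bar>t\<bar> < 1" shows "tanh (artanh t) = t"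
proof -
  have p: "1 + t > 0" "1 - t > 0" using assms by auto
  have "- 2 * artanh t = ln ((1 - t) / (1 + t))"
    using p by (simp add: artanh_def ln_div)
  then have "exp (- 2 * artanh t) = (1 - t) / (1 + t)"
    using p by simp
  moreover have "1 + exp (- 2 * artanh t) > 0" by (smt (verit) exp_gt_zero)
  ultimately show ?thesis using p by (simp add: tanh_real_altdef divide_simps) (simp add: algebra_simps)
qed

lemma tanh_lip: fixes a b :: real assumes "a \<le> b" shows "tanh b - tanh a \<le> b - a"
proof -
  have "(\<lambda>x. x - tanh x) a \<le> (\<lambda>x. x - tanh x) b"
  proof (rule DERIV_nonneg_imp_nondecreasing[OF assms])
    fix x :: real
    have "DERIV (\<lambda>x. x - tanh x) x :> 1 - (1 - tanh x ^ 2)"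
      by (auto intro!: derivative_eq_intros)
    then show "\<exists>y. DERIV (\<lambda>x. x - tanh x) x :> y \<and> y \<ge> 0" by force
  qed
  then show ?thesis by simp
qed

lemma tanh_scale: fixes c a :: real assumes "c \<ge> 1" "a \<ge> 0" shows "tanh (c * a) \<le> c * tanh a"
proof -
  have "(\<lambda>x. c * tanh x - tanh (c * x)) 0 \<le> (\<lambda>x. c * tanh x - tanh (c * x)) a"
  proof (rule DERIV_nonneg_imp_nondecreasing[OF assms(2)])
    fix x :: real assume x: "0 \<le> x"
    have "tanh x \<le> tanh (c * x)" using x assms by (simp add: mult_right_mono[of 1 c x, simplified])
    moreover have "0 \<le> tanh x" using x by simp
    ultimately have "tanh x ^ 2 \<le> tanh (c * x) ^ 2" by (rule power_mono)
    then have "c * (1 - tanh x ^ 2) - c * (1 - tanh (c * x) ^ 2) \<ge> 0" using assms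
      by (simp add: algebra_simps)
    moreover have "DERIV (\<lambda>x. c * tanh x - tanh (c * x)) x :> c * (1 - tanh x ^ 2) - (1 - tanh (c * x) ^ 2) * c"
      by (auto intro!: derivative_eq_intros)
    ultimately show "\<exists>y. DERIV (\<lambda>x. c * tanh x - tanh (c * x)) x :> y \<and> y \<ge> 0"
      by (intro exI conjI) (auto simp: algebra_simps)
  qed
  then show ?thesis by simp
qed

lemma powr_subadd: fixes a b p :: real assumes "a \<ge> 0" "b \<ge> 0" "0 < p" "p \<le> 1"
  shows "(a + b) powr p \<le> a powr p + b powr p"
proof (cases "a + b = 0")
  case True then show ?thesis using assms by auto
next
  case False
  then have s: "a + b > 0" using assms by auto
  have "a / (a+b) \<le> (a/(a+b)) powr p"
    using powr_mono'[of p 1 "a/(a+b)"] assms s by simp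
  moreover have "b / (a+b) \<le> (b/(a+b)) powr p"
    using powr_mono'[of p 1 "b/(a+b)"] assms s by simp
  moreover have "a/(a+b) + b/(a+b) = 1" using s by (simp add: add_divide_distrib[symmetric])
  ultimately have "1 \<le> (a/(a+b)) powr p + (b/(a+b)) powr p"
    by linarith
  also have "\<dots> = (a powr p + b powr p) / (a+b) powr p"
    using assms s by (simp add: powr_divide add_divide_distrib)
  finally show ?thesis using s by (simp add: divide_simps)
qed

lemma powr_diff_le: fixes a b p :: real assumes "a \<ge> 0" "b \<ge> 0" "0 < p" "p \<le> 1"
  shows "\<bar>a powr p - b powr p\<bar> \<le> \<bar>a - b\<bar> powr p"
proof -
  have *: "y powr p - x powr p \<le> (y - x) powr p" if "0 \<le> x" "x \<le> y" for x y :: real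
    using powr_subadd[of x "y - x" p] that assms by simp
  have **: "x powr p \<le> y powr p" if "0 \<le> x" "x \<le> y" for x y :: real
    using powr_mono2[of p x y] that assms by simp
  show ?thesis
  proof (cases "a \<le> b")
    case True then show ?thesis using *[of a b] **[of a b] assms by (simp add: abs_minus_commute)
  next
    case False then show ?thesis using *[of b a] **[of b a] assms by simp
  qed
qed

lemma artanh_mono: fixes s t :: real assumes "\<bar>s\<bar> < 1" "\<bar>t\<bar> < 1" "s \<le> t"
  shows "artanh s \<le> artanh t"
  using assms tanh_artanh[of s] tanh_artanh[of t] tanh_real_le_iff[of "artanh s" "artanh t"] by simp

lemma artanh_pos: fixes t :: real assumes "0 < t" "t < 1" shows "artanh t > 0"
  using assms tanh_artanh[of t] tanh_real_pos_iff[of "artanh t"] by simp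

lemma A_lip: fixes C s t :: real assumes "C \<ge> 1" "0 \<le> s" "s \<le> t" "t < 1"
  shows "tanh (C * artanh t) - tanh (C * artanh s) \<le> C * (t - s)"
proof -
  have "(\<lambda>x. C * x - tanh (C * artanh x)) s \<le> (\<lambda>x. C * x - tanh (C * artanh x)) t"
  proof (rule DERIV_nonneg_imp_nondecreasing[OF assms(3)])
    fix x :: real assume x: "s \<le> x" "x \<le> t"
    then have xa: "\<bar>x\<bar> < 1" using assms by auto
    have a0: "artanh x \<ge> 0" using artanh_mono[of 0 x] xa x assms by simp
    have "tanh (artanh x) \<le> tanh (C * artanh x)" using a0 assms
      by (simp add: mult_right_mono[of 1 C "artanh x", simplified])
    moreover have "0 \<le> tanh (artanh x)" using a0 by simp
    ultimately have "tanh (artanh x) ^ 2 \<le> tanh (C * artanh x) ^ 2" by (rule power_mono)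
    then have le: "1 - tanh (C * artanh x) ^ 2 \<le> 1 - x ^ 2" using tanh_artanh[OF xa] by simp
    have pos: "1 - x ^ 2 > 0" using xa by (simp add: abs_square_less_1)
    have "(1 - tanh (C * artanh x) ^ 2) / (1 - x ^ 2) \<le> 1" using le pos by simp
    then have "C * ((1 - tanh (C * artanh x) ^ 2) / (1 - x ^ 2)) \<le> C" using assms
      using mult_left_le[of "(1 - tanh (C * artanh x) ^ 2) / (1 - x ^ 2)" C] by linarith
    moreover have "(1 - tanh (C * artanh x) ^ 2) * (C * (1 / (1 - x ^ 2))) = C * ((1 - tanh (C * artanh x) ^ 2) / (1 - x ^ 2))"
      by simp
    ultimately have ge: "C - (1 - tanh (C * artanh x) ^ 2) * (C * (1 / (1 - x ^ 2))) \<ge> 0"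
      by linarith
    have "DERIV (\<lambda>x. C * x - tanh (C * artanh x)) x :> C * 1 - (1 - tanh (C * artanh x) ^ 2) * (C * (1 / (1 - x ^ 2)))"
      using xa by (auto intro!: derivative_eq_intros)
    then show "\<exists>y. DERIV (\<lambda>x. C * x - tanh (C * artanh x)) x :> y \<and> y \<ge> 0"
      using ge by (intro exI conjI) auto
  qed
  then show ?thesis by (simp add: algebra_simps)
qed

lemma artanh_lip: fixes s t :: real assumes "0 \<le> s" "s \<le> t" "t \<le> 1/2"
  shows "artanh t - artanh s \<le> 4/3 * (t - s)"
proof -
  have "(\<lambda>x. 4/3 * x - artanh x) s \<le> (\<lambda>x. 4/3 * x - artanh x) t"
  proof (rule DERIV_nonneg_imp_nondecreasing[OF assms(2)])
    fix x :: real assume x: "s \<le> x" "x \<le> t"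
    then have xa: "\<bar>x\<bar> < 1" using assms by auto
    have "x ^ 2 \<le> (1/2) ^ 2" using x assms by (intro power_mono) auto
    then have "1 - x^2 \<ge> 3/4" by (simp add: power2_eq_square)
    then have "1 / (1 - x^2) \<le> 4/3" by (simp add: divide_simps)
    then have ge: "4/3 * 1 - 1 / (1 - x^2) \<ge> 0" by simp
    have "DERIV (\<lambda>x. 4/3 * x - artanh x) x :> 4/3 * 1 - 1 / (1 - x^2)"
      using xa by (auto intro!: derivative_eq_intros)
    then show "\<exists>y. DERIV (\<lambda>x. 4/3 * x - artanh x) x :> y \<and> y \<ge> 0"
      using ge by (intro exI conjI) auto
  qed
  then show ?thesis by (simp add: algebra_simps)
qed

lemma tanh_abs_lip: fixes a b :: real shows "\<bar>tanh a - tanh b\<bar> \<le> \<bar>a - b\<bar>"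
proof (cases "a \<le> b")
  case True then show ?thesis using tanh_lip[of a b] tanh_real_le_iff[of a b] by simp
next
  case False then show ?thesis using tanh_lip[of b a] tanh_real_le_iff[of b a] by simp
qed

theorem theorem5p3:
  fixes K C :: real
  assumes "K \<ge> 1" and "C \<ge> 1"
  shows "(\<forall>t \<in> {0<..<1}. H_fun K C t \<le> C * t powr (1 / K)) \<and>
         (\<exists>M. \<forall>s \<in> {0<..<1}. \<forall>t \<in> {0<..<1}.
              \<bar>H_fun K C s - H_fun K C t\<bar> \<le> M * \<bar>s - t\<bar> powr (1 / K))"
proof -
  define p where "p = 1 / K"
  have p0: "0 < p" and p1: "p \<le> 1" using assms unfolding p_def by auto
  define t0 :: real where "t0 = tanh (1/2)"
  have t0pos: "0 < t0" unfolding t0_def by simp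
  have t0half: "t0 \<le> 1/2" using tanh_lip[of 0 "1/2"] unfolding t0_def by simp
  have ge_t0: "t0 \<le> t \<longleftrightarrow> 1 \<le> 2 * artanh t" if "0 < t" "t < 1" for t
  proof -
    have "t0 \<le> t \<longleftrightarrow> tanh (1/2) \<le> tanh (artanh t)" using that tanh_artanh[of t] t0_def by simp
    also have "\<dots> \<longleftrightarrow> 1/2 \<le> artanh t" by simp
    finally show ?thesis by (simp add: mult.commute)
  qed
  have HA: "H_fun K C t = tanh (C * artanh t)" if "0 < t" "t < 1" "t0 \<le> t" for t
  proof -
    have x1: "1 \<le> 2 * artanh t" using ge_t0 that by simp
    have "(2 * artanh t) powr p \<le> (2 * artanh t) powr 1"
      using powr_mono[OF p1 x1] .
    then have "max (2 * artanh t) ((2 * artanh t) powr p) = 2 * artanh t" using x1 by simp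
    then show ?thesis unfolding H_fun_def p_def[symmetric] by simp
  qed
  have HB: "H_fun K C t = tanh (C / 2 * (2 * artanh t) powr p)" if "0 < t" "t < 1" "t \<le> t0" for t
  proof -
    have x1: "2 * artanh t \<le> 1" using ge_t0[OF that(1,2)] that(3) by (cases "t = t0") (auto simp: t0_def artanh_tanh_real)
    have x0: "0 \<le> 2 * artanh t" using artanh_pos[OF that(1,2)] by simp
    have "(2 * artanh t) powr 1 \<le> (2 * artanh t) powr p"
      using powr_mono'[OF p1 x0 x1] .
    then have "max (2 * artanh t) ((2 * artanh t) powr p) = (2 * artanh t) powr p" using x0 by simp
    then show ?thesis unfolding H_fun_def p_def[symmetric] by simp
  qed
  have part1: "H_fun K C t \<le> C * t powr p" if t: "0 < t" "t < 1" for t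
  proof -
    define x where "x = 2 * artanh t"
    have x0: "0 < x" using artanh_pos[OF t] x_def by simp
    have tx: "tanh (x/2) = t" using x_def tanh_artanh[of t] t by simp
    have tlex: "t \<le> x" using tanh_lip[of 0 "x/2"] tx x0 by simp
    have tp: "t \<le> t powr p" using powr_mono'[OF p1, of t] t by simp
    define m where "m = max x (x powr p)"
    have m0: "0 \<le> m" unfolding m_def using x0 by simp
    have H: "H_fun K C t = tanh (C * (m / 2))" unfolding H_fun_def m_def x_def p_def by simp
    have "tanh (C * (m/2)) \<le> C * tanh (m/2)" using tanh_scale[OF assms(2), of "m/2"] m0 by simp
    moreover have "tanh (m/2) \<le> t powr p"
    proof (cases "1 \<le> x")
      case True
      then have "x powr p \<le> x powr 1" using powr_mono[OF p1 True] by blast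
      then have "m = x" unfolding m_def using x0 by simp
      then show ?thesis using tx tp by simp
    next
      case False
      then have "x powr 1 \<le> x powr p" using powr_mono'[OF p1, of x] x0 by simp
      then have mw: "m = x powr p" unfolding m_def using x0 by simp
      have q: "x powr p / x \<ge> 1" using \<open>x powr 1 \<le> x powr p\<close> x0 by simp
      have "tanh (m/2) = tanh ((x powr p / x) * (x/2))" using mw x0 by simp
      also have "\<dots> \<le> (x powr p / x) * tanh (x/2)" using tanh_scale[OF q, of "x/2"] x0 by simp
      also have "\<dots> = x powr (p - 1) * t" using tx x0 by (simp add: powr_diff)
      also have "\<dots> \<le> t powr (p - 1) * t"
        using powr_mono2'[of "p - 1" t x] p1 t tlex by (intro mult_right_mono) auto
      also have "\<dots> = t powr p" using t by (simp add: powr_diff)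
      finally show ?thesis .
    qed
    ultimately show ?thesis using H assms(2) by (smt (verit) mult_left_mono)
  qed
  have Bbound: "\<bar>H_fun K C s - H_fun K C t\<bar> \<le> 4/3 * C * (t - s) powr p"
    if st: "0 < s" "s \<le> t" "t \<le> t0" for s t
  proof -
    have t1: "t < 1" using st t0half by simp
    have xs: "0 \<le> 2 * artanh s" using artanh_pos[of s] st t1 by simp
    have xt: "0 \<le> 2 * artanh t" using artanh_pos[of t] st t1 by simp
    have d: "\<bar>2 * artanh s - 2 * artanh t\<bar> \<le> 8/3 * (t - s)"
      using artanh_lip[of s t] artanh_mono[of s t] st t0half t1 by simp
    have "\<bar>H_fun K C s - H_fun K C t\<bar>
        = \<bar>tanh (C / 2 * (2 * artanh s) powr p) - tanh (C / 2 * (2 * artanh t) powr p)\<bar>"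
      using HB[of s] HB[of t] st t1 by simp
    also have "\<dots> \<le> \<bar>C / 2 * (2 * artanh s) powr p - C / 2 * (2 * artanh t) powr p\<bar>"
      by (rule tanh_abs_lip)
    also have "\<dots> = C / 2 * \<bar>(2 * artanh s) powr p - (2 * artanh t) powr p\<bar>"
    proof -
      have "C / 2 * (2 * artanh s) powr p - C / 2 * (2 * artanh t) powr p = C / 2 * ((2 * artanh s) powr p - (2 * artanh t) powr p)"
        by (simp add: right_diff_distrib)
      then show ?thesis using assms(2) by (simp only: abs_mult)
    qed
    also have "\<dots> \<le> C / 2 * \<bar>2 * artanh s - 2 * artanh t\<bar> powr p"
      using powr_diff_le[OF xs xt p0 p1] assms(2) by simp
    also have "\<dots> \<le> C / 2 * (8/3 * (t - s)) powr p"
      using powr_mono2[of p _ "8/3 * (t - s)", OF _ _ d] p0 assms(2) by simp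
    also have "\<dots> = C / 2 * ((8/3) powr p * (t - s) powr p)"
      using st powr_mult[of "8/3" "t - s" p] by simp
    also have "\<dots> \<le> C / 2 * ((8/3) * (t - s) powr p)"
      using powr_mono[OF p1, of "8/3"] assms(2) by (intro mult_left_mono mult_right_mono) auto
    finally show ?thesis by simp
  qed
  have Abound: "\<bar>H_fun K C s - H_fun K C t\<bar> \<le> C * (t - s) powr p"
    if st: "t0 \<le> s" "s \<le> t" "t < 1" for s t
  proof -
    have s0: "0 < s" using st t0pos by simp
    have "artanh s \<le> artanh t" using artanh_mono[of s t] st s0 by simp
    then have "tanh (C * artanh s) \<le> tanh (C * artanh t)" using assms(2)
      by (simp add: mult_left_mono)
    then have "\<bar>H_fun K C s - H_fun K C t\<bar> \<le> C * (t - s)"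
      using HA[of s] HA[of t] st s0 A_lip[OF assms(2), of s t] by simp
    also have "\<dots> \<le> C * (t - s) powr p"
      using powr_mono'[OF p1, of "t - s"] st s0 assms(2) by (intro mult_left_mono) auto
    finally show ?thesis .
  qed
  have main: "\<bar>H_fun K C s - H_fun K C t\<bar> \<le> 3 * C * (t - s) powr p"
    if st: "0 < s" "s \<le> t" "t < 1" for s t
  proof -
    have nn: "0 \<le> C * (t - s) powr p" using assms(2) by simp
    consider "t \<le> t0" | "t0 \<le> s" | "s < t0" "t0 < t" by linarith
    then show ?thesis
    proof cases
      case 1 then show ?thesis using Bbound[of s t] st nn by simp
    next
      case 2 then show ?thesis using Abound[of s t] st nn by simp
    next
      case 3
      have "\<bar>H_fun K C s - H_fun K C t\<bar> \<le> \<bar>H_fun K C s - H_fun K C t0\<bar> + \<bar>H_fun K C t0 - H_fun K C t\<bar>"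
        by simp
      also have "\<dots> \<le> 4/3 * C * (t0 - s) powr p + C * (t - t0) powr p"
        using Bbound[of s t0] Abound[of t0 t] 3 st by (intro add_mono) auto
      also have "\<dots> \<le> 4/3 * C * (t - s) powr p + C * (t - s) powr p"
        using powr_mono2[of p "t0 - s" "t - s"] powr_mono2[of p "t - t0" "t - s"] p0 3 st assms(2)
        by (intro add_mono mult_left_mono) auto
      finally show ?thesis using nn by simp
    qed
  qed
  show ?thesis
  proof (intro conjI ballI exI[of _ "3 * C"])
    fix t :: real assume "t \<in> {0<..<1}"
    then show "H_fun K C t \<le> C * t powr (1 / K)" using part1 p_def by simp
  next
    fix s t :: real assume s: "s \<in> {0<..<1}" and t: "t \<in> {0<..<1}"
    show "\<bar>H_fun K C s - H_fun K C t\<bar> \<le> 3 * C * \<bar>s - t\<bar> powr (1 / K)"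
    proof (cases "s \<le> t")
      case True then show ?thesis using main[of s t] s t p_def by simp
    next
      case False then show ?thesis using main[of t s] s t p_def by (simp add: abs_minus_commute)
    qed
  qed
qed

end
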